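(* Fix $\eta>0$ and $u\in\mathbb{R}^d$. Let $C=\{1,\dots,m\}$ be a set of $m\ge1$ rollouts, each with verifier reward $r_i=1$, whose reward-weighted embeddings are all identical: $\tilde z_i=u$ for all $i\in C$. Define the team value on subsets $S\subseteq C$ by $v(\emptyset)=0$ and $v(S)=\log\det(I_{|S|}+\eta L_S)$, where $L_S=(\langle\tilde z_j,\tilde z_k\rangle)_{j,k\in S}$. Let $\phi_i$ denote the Shapley value of player $i$ in the cooperative game $(C,v)$, i.e. $$\phi_i=\sum_{S\subseteq C\setminus\{i\}}\frac{|S|!\,(m-|S|-1)!}{m!}\left[v(S\cup\{i\})-v(S)\right].$$ Then for every $i\in C$, $$\phi_i=\frac{1}{m}\log\left(1+\eta m\|u\|_2^2\right).$$
   Context: In the paper, $\tilde z_i=r_i\bar z_i$ where $r_i$ is the binary verifier reward and $\bar z_i$ the unit-normalized semantic embedding of a sampled response; "verifier-correct" means $r_i=1$. *)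

theory Defs
  imports "HOL-Analysis.Analysis" "Jordan_Normal_Form.Determinant"
begin

definition gram_sub :: "(nat \<Rightarrow> real ^ 'd) \<Rightarrow> nat set \<Rightarrow> real mat" where
  "gram_sub z S = (let xs = sorted_list_of_set S in
     mat (card S) (card S) (\<lambda>(j, k). inner (z (xs ! j)) (z (xs ! k))))"

definition team_value :: "real \<Rightarrow> (nat \<Rightarrow> real ^ 'd) \<Rightarrow> nat set \<Rightarrow> real" where
  "team_value \<eta> z S = (if S = {} then 0
     else ln (det (1\<^sub>m (card S) + \<eta> \<cdot>\<^sub>m gram_sub z S)))"

definition shapley :: "'p set \<Rightarrow> ('p set \<Rightarrow> real) \<Rightarrow> 'p \<Rightarrow> real" where
  "shapley C v i = (\<Sum>S\<in>Pow (C - {i}).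
     (fact (card S) * fact (card C - card S - 1) / fact (card C)) * (v (insert i S) - v S))"

end

theory Submission
  imports Defs
begin

lemma mult_entry:
  fixes A B :: "'a::comm_ring_1 mat"
  assumes "A \<in> carrier_mat n k" "B \<in> carrier_mat k p" "i < n" "j < p"
  shows "(A * B) $$ (i, j) = (\<Sum>l<k. A $$ (i, l) * B $$ (l, j))"
  using assms by (auto simp: scalar_prod_def lessThan_atLeast0 intro!: sum.cong)

lemma det_IJ:
  fixes b :: real
  shows "det (mat k k (\<lambda>(i,j). (if i = j then 1 else 0) + b)) = 1 + real k * b"
proof (cases "k = 0")
  case True then show ?thesis by (simp add: det_def)
next
  case False
  define M where "M = mat k k (\<lambda>(i,j). (if i = j then 1 else 0) + b)"
  define B where "B = mat k k (\<lambda>(i,j). if i = j \<or> j = 0 then 1 else (0::real))"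
  define A where "A = mat k k (\<lambda>(i,j). if i = j then 1 else if j = 0 then -1 else (0::real))"
  define T where "T = mat k k (\<lambda>(i,j). if i = 0 then (if j = 0 then 1 + real k * b else b)
      else if i = j then 1 else (0::real))"
  have carr: "M \<in> carrier_mat k k" "A \<in> carrier_mat k k" "B \<in> carrier_mat k k" "T \<in> carrier_mat k k"
    by (auto simp: M_def A_def B_def T_def)
  have dB: "det B = 1"
  proof -
    have "diag_mat B = replicate k 1" by (auto simp: B_def diag_mat_def intro!: nth_equalityI)
    then show ?thesis by (subst det_lower_triangular[of k], auto simp: B_def)
  qed
  have dA: "det A = 1"
  proof -
    have "diag_mat A = replicate k 1" by (auto simp: A_def diag_mat_def intro!: nth_equalityI)
    then show ?thesis by (subst det_lower_triangular[of k], auto simp: A_def)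
  qed
  have dT: "det T = 1 + real k * b"
  proof -
    have "det T = prod_list (diag_mat T)"
      by (rule det_upper_triangular[of _ k], auto simp: upper_triangular_def T_def)
    also have "diag_mat T = map (\<lambda>i. if i = 0 then 1 + real k * b else 1) [0..<k]"
      by (auto simp: diag_mat_def T_def)
    also have "prod_list \<dots> = (\<Prod>i\<in>{0..<k}. if i = 0 then 1 + real k * b else 1)"
      by (metis distinct_upt prod.distinct_set_conv_list set_upt)
    also have "\<dots> = 1 + real k * b" using False by (simp add: prod.delta)
    finally show ?thesis .
  qed
  have MB: "M * B = mat k k (\<lambda>(i,j). if j = 0 then 1 + real k * b else (if i = j then 1 else 0) + b)"
  proof (rule eq_matI)
    fix i j assume ij: "i < dim_row (mat k k (\<lambda>(i,j). if j = 0 then 1 + real k * b else (if i = j then 1 else 0) + b))"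
       "j < dim_col (mat k k (\<lambda>(i,j). if j = 0 then 1 + real k * b else (if i = j then 1 else 0) + b))"
    then have i: "i < k" and j: "j < k" by auto
    show "(M * B) $$ (i, j) = mat k k (\<lambda>(i,j). if j = 0 then 1 + real k * b else (if i = j then 1 else 0) + b) $$ (i, j)"
    proof (cases "j = 0")
      case True
      have "(M * B) $$ (i, j) = (\<Sum>l<k. M $$ (i, l) * B $$ (l, j))"
        using i j carr by (intro mult_entry) auto
      also have "\<dots> = (\<Sum>l<k. (if i = l then 1 else 0) + b)"
        using i j True by (intro sum.cong) (auto simp: M_def B_def)
      also have "\<dots> = 1 + real k * b" using i by (simp add: sum.distrib)
      finally show ?thesis using i j True by simp
    next
      case False
      have "(M * B) $$ (i, j) = (\<Sum>l<k. M $$ (i, l) * B $$ (l, j))"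
        using i j carr by (intro mult_entry) auto
      also have "\<dots> = (\<Sum>l<k. if l = j then (if i = j then 1 else 0) + b else 0)"
        using i j False by (intro sum.cong) (auto simp: M_def B_def)
      also have "\<dots> = (if i = j then 1 else 0) + b" using j by simp
      finally show ?thesis using i j False by simp
    qed
  qed (auto simp: M_def B_def)
  have AMB: "A * (M * B) = T"
  proof (rule eq_matI)
    fix i j assume ij: "i < dim_row T" "j < dim_col T"
    then have i: "i < k" and j: "j < k" by (auto simp: T_def)
    let ?X = "\<lambda>l. (if j = 0 then 1 + real k * b else (if l = j then 1 else 0) + b)"
    have "(A * (M * B)) $$ (i, j) = (\<Sum>l<k. A $$ (i, l) * (M * B) $$ (l, j))"
      using i j carr by (intro mult_entry) (auto simp: MB)
    also have "\<dots> = (\<Sum>l<k. (if i = l then 1 else if l = 0 then -1 else 0) * ?X l)"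
      using i j by (intro sum.cong) (auto simp: MB A_def)
    also have "\<dots> = (if i = 0 then ?X 0 else ?X i - ?X 0)"
    proof (cases "i = 0")
      case True
      have "(\<Sum>l<k. (if i = l then 1 else if l = 0 then -1 else 0) * ?X l)
          = (\<Sum>l<k. if l = 0 then ?X 0 else 0)"
        using True by (intro sum.cong) auto
      also have "\<dots> = ?X 0" using i True by simp
      finally show ?thesis using True by simp
    next
      case False
      have "(\<Sum>l<k. (if i = l then 1 else if l = 0 then -1 else 0) * ?X l)
          = (\<Sum>l<k. (if l = i then ?X i else 0) + (if l = 0 then - ?X 0 else 0))"
        using False by (intro sum.cong) auto
      also have "\<dots> = ?X i - ?X 0" using i False by (simp add: sum.distrib)
      finally show ?thesis using False by simp
    qed
    also have "\<dots> = T $$ (i, j)" using i j by (auto simp: T_def)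
    finally show "(A * (M * B)) $$ (i, j) = T $$ (i, j)" .
  qed (auto simp: A_def T_def MB)
  have "det T = det A * (det M * det B)"
    using carr by (simp add: AMB[symmetric] det_mult[of _ k] mult_carrier_mat[of _ k k])
  then show ?thesis using dA dB dT by (simp add: M_def)
qed

lemma team_value_const:
  fixes z :: "nat \<Rightarrow> real ^ 'd"
  assumes fin: "finite S" and zu: "\<forall>j\<in>S. z j = u"
  shows "team_value \<eta> z S = ln (1 + \<eta> * real (card S) * (norm u)\<^sup>2)"
proof (cases "S = {}")
  case True then show ?thesis by (simp add: team_value_def)
next
  case False
  let ?k = "card S"
  let ?xs = "sorted_list_of_set S"
  have mem: "z (?xs ! j) = u" if "j < ?k" for j
  proof -
    have "?xs ! j \<in> set ?xs" using that by (intro nth_mem) simp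
    then have "?xs ! j \<in> S" using fin by simp
    then show ?thesis using zu by blast
  qed
  have g: "gram_sub z S = mat ?k ?k (\<lambda>_. inner u u)"
    unfolding gram_sub_def Let_def
  proof (rule eq_matI)
    fix i j assume "i < dim_row (mat ?k ?k (\<lambda>_. inner u u))" "j < dim_col (mat ?k ?k (\<lambda>_. inner u u))"
    then have ij: "i < ?k" "j < ?k" by auto
    then show "mat ?k ?k (\<lambda>(j, k). inner (z (?xs ! j)) (z (?xs ! k))) $$ (i, j) = mat ?k ?k (\<lambda>_. inner u u) $$ (i, j)"
      by (simp add: mem)
  qed auto
  have e: "1\<^sub>m ?k + \<eta> \<cdot>\<^sub>m gram_sub z S = mat ?k ?k (\<lambda>(i,j). (if i = j then 1 else 0) + \<eta> * (norm u)\<^sup>2)"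
    unfolding g by (rule eq_matI) (auto simp: power2_norm_eq_inner)
  have "team_value \<eta> z S = ln (det (1\<^sub>m ?k + \<eta> \<cdot>\<^sub>m gram_sub z S))"
    using False by (simp add: team_value_def)
  also have "\<dots> = ln (1 + real ?k * (\<eta> * (norm u)\<^sup>2))"
    by (simp only: e det_IJ)
  also have "\<dots> = ln (1 + \<eta> * real (card S) * (norm u)\<^sup>2)"
    by (simp add: mult.commute mult.left_commute mult.assoc)
  finally show ?thesis .
qed

lemma shapley_sym:
  fixes f :: "nat \<Rightarrow> real"
  assumes fin: "finite C" and iC: "i \<in> C"
    and v: "\<And>S. S \<subseteq> C \<Longrightarrow> v S = f (card S)"
  shows "shapley C v i = (f (card C) - f 0) / real (card C)"
proof -
  define n where "n = card C"
  have n1: "n \<ge> 1"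
  proof -
    have "C \<noteq> {}" using iC by blast
    then have "card C > 0" using fin by (simp add: card_gt_0_iff)
    then show ?thesis by (simp add: n_def)
  qed
  define A where "A = C - {i}"
  have finA: "finite A" using fin by (simp add: A_def)
  have cA: "card A = n - 1" using fin iC by (simp add: A_def n_def)
  define h where "h = (\<lambda>k. fact k * fact (n - k - 1) / fact n * (f (Suc k) - f k) :: real)"
  have "shapley C v i = (\<Sum>S\<in>Pow A. h (card S))"
    unfolding shapley_def A_def[symmetric] n_def[symmetric]
  proof (intro sum.cong refl)
    fix S assume S: "S \<in> Pow A"
    then have sA: "S \<subseteq> A" by simp
    then have iS: "i \<notin> S" by (auto simp: A_def)
    have fS: "finite S" using sA finA by (rule finite_subset)
    have sC: "S \<subseteq> C" "insert i S \<subseteq> C" using sA iC by (auto simp: A_def)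
    have ci: "card (insert i S) = Suc (card S)" using fS iS by simp
    show "fact (card S) * fact (n - card S - 1) / fact n * (v (insert i S) - v S) = h (card S)"
      unfolding h_def v[OF sC(1)] v[OF sC(2)] ci ..
  qed
  also have "\<dots> = (\<Sum>k<n. \<Sum>S\<in>{S \<in> Pow A. card S = k}. h (card S))"
  proof (rule sum.group[symmetric])
    show "card ` Pow A \<subseteq> {..<n}"
    proof
      fix x assume "x \<in> card ` Pow A"
      then obtain S where "S \<subseteq> A" "x = card S" by auto
      then have "x \<le> n - 1" using card_mono[OF finA] cA by auto
      then show "x \<in> {..<n}" using n1 by auto
    qed
  qed (use finA in auto)
  also have "\<dots> = (\<Sum>k<n. real (n - 1 choose k) * h k)"
  proof (intro sum.cong refl)
    fix k assume "k \<in> {..<n}"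
    have "(\<Sum>S\<in>{S \<in> Pow A. card S = k}. h (card S)) = (\<Sum>S\<in>{S. S \<subseteq> A \<and> card S = k}. h k)"
      by (intro sum.cong) auto
    also have "\<dots> = real (card {S. S \<subseteq> A \<and> card S = k}) * h k" by simp
    also have "card {S. S \<subseteq> A \<and> card S = k} = n - 1 choose k" using n_subsets[OF finA, of k] cA by simp
    finally show "(\<Sum>S\<in>{S \<in> Pow A. card S = k}. h (card S)) = real (n - 1 choose k) * h k" .
  qed
  also have "\<dots> = (\<Sum>k<n. (f (Suc k) - f k) / real n)"
  proof (intro sum.cong refl)
    fix k assume k: "k \<in> {..<n}"
    then have kn: "k \<le> n - 1" by auto
    have b: "real (n - 1 choose k) = fact (n - 1) / (fact k * fact (n - 1 - k))"
      using binomial_fact[OF kn] by simp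
    have nn: "n - k - 1 = n - 1 - k" by simp
    have fn: "(fact n :: real) = real n * fact (n - 1)"
      using fact_reduce[of n] n1 by simp
    have nz: "(fact k :: real) \<noteq> 0" "(fact (n - 1 - k) :: real) \<noteq> 0" "(fact (n - 1) :: real) \<noteq> 0"
      "real n \<noteq> 0" using n1 by auto
    show "real (n - 1 choose k) * h k = (f (Suc k) - f k) / real n"
      unfolding h_def b fn nn using nz by (simp add: field_simps)
  qed
  also have "\<dots> = (f n - f 0) / real n"
    by (simp add: sum_divide_distrib[symmetric] sum_lessThan_telescope)
  finally show ?thesis by (simp add: n_def)
qed

theorem theorem2:
  fixes \<eta> :: real and u :: "real ^ 'd" and m :: nat
    and r :: "nat \<Rightarrow> real" and zbar :: "nat \<Rightarrow> real ^ 'd" and i :: nat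
  assumes "\<eta> > 0" and "m \<ge> 1"
    and "\<forall>j\<in>{1..m}. r j = 1"
    and "\<forall>j\<in>{1..m}. r j *\<^sub>R zbar j = u"
    and "i \<in> {1..m}"
  shows "shapley {1..m} (team_value \<eta> (\<lambda>j. r j *\<^sub>R zbar j)) i
           = (1 / real m) * ln (1 + \<eta> * real m * (norm u)\<^sup>2)"
proof -
  have "shapley {1..m} (team_value \<eta> (\<lambda>j. r j *\<^sub>R zbar j)) i
     = ((\<lambda>k. ln (1 + \<eta> * real k * (norm u)\<^sup>2)) (card {1..m}) - (\<lambda>k. ln (1 + \<eta> * real k * (norm u)\<^sup>2)) 0) / real (card {1..m})"
  proof (rule shapley_sym)
    fix S assume "S \<subseteq> {1..m}"
    then show "team_value \<eta> (\<lambda>j. r j *\<^sub>R zbar j) S = ln (1 + \<eta> * real (card S) * (norm u)\<^sup>2)"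
      using assms(4) by (intro team_value_const) (auto intro: finite_subset)
  qed (use assms in auto)
  then show ?thesis by simp
qed
end
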